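(* For integers $n,r\ge0$, $$\frac{1}{r!\,n!}\int_{E_2}\left(\log\frac{1-t_1}{1-t_2}\right)^r\left(\log\frac{1}{1-t_1}-\log\frac{t_2}{t_1}\right)^n\frac{dt_1\,dt_2}{(1-t_1)t_2}=\begin{cases}\zeta^\star(r+2,\{2\}^m),& n=2m,\\ 0,& n=2m+1.\end{cases}$$
   Context: $E_2=\{(t_1,t_2)\in\mathbb{R}^2:0<t_1<t_2<1\}$. $\zeta^\star(\alpha_1,\ldots,\alpha_s)=\sum_{1\le k_1\le\cdots\le k_s}k_1^{-\alpha_1}\cdots k_s^{-\alpha_s}$; $(r+2,\{2\}^m)$ denotes $r+2$ followed by $m$ copies of $2$. *)

theory Defs
  imports "HOL-Analysis.Analysis"
begin

definition E2 :: "(real \<times> real) set" where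
  "E2 = {(t1, t2). 0 < t1 \<and> t1 < t2 \<and> t2 < 1}"

definition zeta_star :: "nat list \<Rightarrow> real" where
  "zeta_star as =
     infsum (\<lambda>ks. \<Prod>i<length as. inverse (real (ks ! i) ^ (as ! i)))
       {ks. length ks = length as \<and> sorted ks \<and> (\<forall>k\<in>set ks. 1 \<le> k)}"

definition integrand3p2 :: "nat \<Rightarrow> nat \<Rightarrow> real \<times> real \<Rightarrow> real" where
  "integrand3p2 r n t = (case t of (t1, t2) \<Rightarrow>
     (ln ((1 - t1) / (1 - t2))) ^ r * (ln (1 / (1 - t1)) - ln (t2 / t1)) ^ n
       / ((1 - t1) * t2))"

end

theory Submission
  imports Defs "HOL-Real_Asymp.Real_Asymp"
begin

definition SL :: "nat \<Rightarrow> nat \<Rightarrow> nat list set" where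
  "SL m k = {ks. length ks = m \<and> sorted ks \<and> (\<forall>j\<in>set ks. Suc k \<le> j)}"

definition w2 :: "nat list \<Rightarrow> real" where
  "w2 ks = (\<Prod>i<length ks. inverse (real (ks ! i) ^ 2))"

fun T :: "nat \<Rightarrow> nat \<Rightarrow> real" where
  "T 0 k = 1"
| "T (Suc m) k = (\<Sum>i. inverse (real (Suc (k + i)) ^ 2) * T m (k + i))"

declare T.simps(2)[simp del]

definition f0 :: "nat \<Rightarrow> real" where "f0 i = inverse (real (Suc i) ^ 2)"
definition B0 :: real where "B0 = suminf f0"

lemma summable_f0: "summable f0"
proof -
  have "summable (\<lambda>n. inverse (real n ^ 2))"
    by (rule inverse_power_summable) auto
  then have "summable (\<lambda>n. inverse (real (Suc n) ^ 2))"
    using summable_Suc_iff[where f="\<lambda>n. inverse (real n ^ 2)", THEN iffD2] by simp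
  then show ?thesis unfolding f0_def .
qed

lemma f0_nonneg: "0 \<le> f0 i" by (simp add: f0_def)

lemma summable_f0_shift: "summable (\<lambda>i. f0 (k + i))"
  using summable_ignore_initial_segment[OF summable_f0, of k] by (simp add: add.commute)

lemma tail_le_B0: "(\<Sum>i. f0 (k + i)) \<le> B0"
proof -
  have "(\<Sum>i. f0 (k + i)) = B0 - (\<Sum>i<k. f0 i)"
    using suminf_minus_initial_segment[OF summable_f0, of k] by (simp add: B0_def add.commute)
  moreover have "(\<Sum>i<k. f0 i) \<ge> 0" by (intro sum_nonneg f0_nonneg)
  ultimately show ?thesis by simp
qed

lemma tail_tendsto0: "(\<lambda>k. \<Sum>i. f0 (k + i)) \<longlonglongrightarrow> 0"
proof -
  have e: "(\<Sum>i. f0 (k + i)) = B0 - (\<Sum>i<k. f0 i)" for k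
    using suminf_minus_initial_segment[OF summable_f0, of k] by (simp add: B0_def add.commute)
  have "(\<lambda>k. B0 - (\<Sum>i<k. f0 i)) \<longlonglongrightarrow> B0 - B0"
    by (intro tendsto_diff tendsto_const) (simp add: B0_def summable_LIMSEQ[OF summable_f0])
  then show ?thesis by (simp add: e)
qed

lemma T_bounds: "0 \<le> T m k \<and> T m k \<le> B0 ^ m"
proof (induction m arbitrary: k)
  case 0
  then show ?case by simp
next
  case (Suc m)
  have nn: "0 \<le> inverse (real (Suc (k + i)) ^ 2) * T m (k + i)" for i
    using Suc.IH[of "k+i"] by simp
  have le: "inverse (real (Suc (k + i)) ^ 2) * T m (k + i) \<le> B0 ^ m * f0 (k + i)" for i
    using Suc.IH[of "k+i"] by (simp add: f0_def mult.commute mult_left_mono)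
  have sm2: "summable (\<lambda>i. B0 ^ m * f0 (k + i))"
    by (intro summable_mult summable_f0_shift)
  have sm: "summable (\<lambda>i. inverse (real (Suc (k + i)) ^ 2) * T m (k + i))"
    by (rule summable_comparison_test'[OF sm2]) (use nn le in auto)
  have "T (Suc m) k \<le> (\<Sum>i. B0 ^ m * f0 (k + i))"
    by (simp only: T.simps) (rule suminf_le[OF le sm sm2])
  also have "\<dots> = B0 ^ m * (\<Sum>i. f0 (k + i))"
    by (rule suminf_mult[OF summable_f0_shift])
  also have "\<dots> \<le> B0 ^ m * B0"
    by (intro mult_left_mono tail_le_B0) (use Suc.IH[of 0] in auto)
  finally have "T (Suc m) k \<le> B0 ^ Suc m" by (simp add: mult.commute)
  moreover have "0 \<le> T (Suc m) k"
    by (simp only: T.simps) (rule suminf_nonneg[OF sm nn])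
  ultimately show ?case by simp
qed

lemma T_nonneg: "0 \<le> T m k" using T_bounds by blast

lemma summable_T_series:
  "summable (\<lambda>i. inverse (real (Suc (k + i)) ^ 2) * T m (k + i))"
proof -
  have le: "norm (inverse (real (Suc (k + i)) ^ 2) * T m (k + i)) \<le> B0 ^ m * f0 (k + i)" for i
    using T_bounds[of m "k+i"] T_nonneg[of m "k+i"] by (simp add: f0_def mult.commute mult_left_mono)
  show ?thesis
    by (rule summable_comparison_test'[OF summable_mult[OF summable_f0_shift]]) (use le in auto)
qed

lemma T_Suc_le_tail: "T (Suc m) k \<le> B0 ^ m * (\<Sum>i. f0 (k + i))"
proof -
  have le: "inverse (real (Suc (k + i)) ^ 2) * T m (k + i) \<le> B0 ^ m * f0 (k + i)" for i
    using T_bounds[of m "k+i"] by (simp add: f0_def mult.commute mult_left_mono)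
  have "T (Suc m) k \<le> (\<Sum>i. B0 ^ m * f0 (k + i))"
    by (simp only: T.simps) (rule suminf_le[OF le summable_T_series summable_mult[OF summable_f0_shift]])
  also have "\<dots> = B0 ^ m * (\<Sum>i. f0 (k + i))"
    by (rule suminf_mult[OF summable_f0_shift])
  finally show ?thesis .
qed

lemma T_Suc_diff: "T (Suc m) k = inverse (real (Suc k) ^ 2) * T m k + T (Suc m) (Suc k)"
proof -
  let ?g = "\<lambda>i. inverse (real (Suc (k + i)) ^ 2) * T m (k + i)"
  have "(\<Sum>i. ?g (Suc i)) = (\<Sum>i. ?g i) - ?g 0"
    by (rule suminf_split_head[OF summable_T_series])
  moreover have "(\<Sum>i. ?g (Suc i)) = T (Suc m) (Suc k)" by (simp add: T.simps)
  moreover have "(\<Sum>i. ?g i) = T (Suc m) k" by (simp add: T.simps)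
  ultimately show ?thesis by simp
qed

lemma w2_Cons: "w2 (j # ks) = inverse (real j ^ 2) * w2 ks"
  unfolding w2_def by (simp only: length_Cons prod.lessThan_Suc_shift) simp

lemma bij_SL:
  "bij_betw (\<lambda>(i, ks). Suc (k + i) # ks) (Sigma UNIV (\<lambda>i. SL m (k + i))) (SL (Suc m) k)"
proof (rule bij_betwI')
  fix x y assume "x \<in> Sigma UNIV (\<lambda>i. SL m (k + i))" "y \<in> Sigma UNIV (\<lambda>i. SL m (k + i))"
  then show "((case x of (i, ks) \<Rightarrow> Suc (k + i) # ks) = (case y of (i, ks) \<Rightarrow> Suc (k + i) # ks)) = (x = y)"
    by (cases x; cases y) auto
next
  fix x assume "x \<in> Sigma UNIV (\<lambda>i. SL m (k + i))"
  then show "(case x of (i, ks) \<Rightarrow> Suc (k + i) # ks) \<in> SL (Suc m) k"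
    by (cases x) (force simp: SL_def)
next
  fix y assume y: "y \<in> SL (Suc m) k"
  then obtain j ks where yj: "y = j # ks" by (cases y) (auto simp: SL_def)
  with y have "Suc k \<le> j" by (auto simp: SL_def)
  then obtain i where "j = Suc (k + i)" by (metis Suc_le_D add_Suc le_Suc_ex)
  with y yj show "\<exists>x\<in>Sigma UNIV (\<lambda>i. SL m (k + i)). y = (case x of (i, ks) \<Rightarrow> Suc (k + i) # ks)"
    by (intro bexI[of _ "(i, ks)"]) (auto simp: SL_def)
qed

lemma has_sum_Sigma_nonneg:
  fixes f :: "nat \<times> 'b \<Rightarrow> real"
  assumes "\<And>i. ((\<lambda>y. f (i, y)) has_sum g i) (B i)"
  assumes "g sums S"
  assumes "\<And>i y. y \<in> B i \<Longrightarrow> 0 \<le> f (i, y)"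
  shows "(f has_sum S) (Sigma UNIV B)"
proof -
  have gnn: "0 \<le> g i" for i
    by (rule has_sum_nonneg[OF assms(1)]) (use assms(3) in auto)
  have gS: "(g has_sum S) UNIV" by (rule sums_nonneg_imp_has_sum[OF assms(2) gnn])
  have "f summable_on Sigma UNIV B"
    by (rule summable_on_SigmaI[OF assms(1)]) (use gS assms(3) in \<open>auto simp: has_sum_imp_summable\<close>)
  then show ?thesis by (rule has_sum_SigmaI[OF assms(1) gS])
qed

lemma has_sum_w2: "(w2 has_sum T m k) (SL m k)"
proof (induction m arbitrary: k)
  case 0
  have "SL 0 k = {[]}" by (auto simp: SL_def)
  then show ?case using has_sum_finite[of "{[]}" w2] by (simp add: w2_def[of "[]"])
next
  case (Suc m)
  let ?f = "\<lambda>(i, ks). inverse (real (Suc (k + i)) ^ 2) * w2 ks"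
  have "(?f has_sum T (Suc m) k) (Sigma UNIV (\<lambda>i. SL m (k + i)))"
  proof (rule has_sum_Sigma_nonneg)
    fix i
    show "((\<lambda>y. ?f (i, y)) has_sum inverse (real (Suc (k + i)) ^ 2) * T m (k + i)) (SL m (k + i))"
      using has_sum_cmult_right[OF Suc.IH[of "k+i"]] by simp
  next
    show "(\<lambda>i. inverse (real (Suc (k + i)) ^ 2) * T m (k + i)) sums T (Suc m) k"
      using summable_T_series by (simp add: summable_sums T.simps)
  next
    fix i y show "0 \<le> ?f (i, y)" by (simp add: w2_def prod_nonneg)
  qed
  then have "((\<lambda>x. w2 ((\<lambda>(i, ks). Suc (k + i) # ks) x)) has_sum T (Suc m) k) (Sigma UNIV (\<lambda>i. SL m (k + i)))"
    by (rule has_sum_cong[THEN iffD1, rotated]) (auto simp: w2_Cons)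
  then show ?case using has_sum_reindex_bij_betw[OF bij_SL] by blast
qed

definition Zs :: "nat \<Rightarrow> nat \<Rightarrow> real" where
  "Zs r m = (\<Sum>i. inverse (real (Suc i) ^ (r + 2)) * T m i)"

lemma summable_Zs: "summable (\<lambda>i. inverse (real (Suc i) ^ (r + 2)) * T m i)"
proof -
  have le: "norm (inverse (real (Suc i) ^ (r + 2)) * T m i) \<le> B0 ^ m * f0 i" for i
  proof -
    have a: "inverse (real (Suc i) ^ (r + 2)) \<le> f0 i"
      unfolding f0_def by (intro le_imp_inverse_le power_increasing) auto
    have "inverse (real (Suc i) ^ (r + 2)) * T m i \<le> f0 i * B0 ^ m"
      by (rule mult_mono[OF a]) (use T_bounds[of m i] f0_nonneg[of i] in auto)
    then show ?thesis using T_nonneg[of m i] by (simp add: mult.commute)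
  qed
  show ?thesis
    by (rule summable_comparison_test'[OF summable_mult[OF summable_f0]]) (use le in auto)
qed

lemma zeta_star_eq: "zeta_star ((r + 2) # replicate m 2) = Zs r m"
proof -
  let ?as = "(r + 2) # replicate m 2"
  let ?F = "\<lambda>ks. \<Prod>i<length ?as. inverse (real (ks ! i) ^ (?as ! i))"
  have set: "{ks. length ks = length ?as \<and> sorted ks \<and> (\<forall>k\<in>set ks. 1 \<le> k)} = SL (Suc m) 0"
    by (auto simp: SL_def)
  let ?f = "\<lambda>(i, ks). inverse (real (Suc i) ^ (r + 2)) * w2 ks"
  have hs: "(?f has_sum Zs r m) (Sigma UNIV (\<lambda>i. SL m (0 + i)))"
  proof (rule has_sum_Sigma_nonneg)
    fix i
    show "((\<lambda>y. ?f (i, y)) has_sum inverse (real (Suc i) ^ (r + 2)) * T m i) (SL m (0 + i))"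
      using has_sum_cmult_right[OF has_sum_w2[of m i]] by simp
  next
    show "(\<lambda>i. inverse (real (Suc i) ^ (r + 2)) * T m i) sums Zs r m"
      using summable_Zs by (simp add: summable_sums Zs_def)
  next
    fix i y show "0 \<le> ?f (i, y)" by (simp add: w2_def prod_nonneg)
  qed
  have eq: "?F (Suc (0 + i) # ks) = ?f (i, ks)" if "ks \<in> SL m (0 + i)" for i ks
  proof -
    have len: "length ks = m" using that by (simp add: SL_def)
    have "?F (Suc i # ks) = inverse (real (Suc i) ^ (r + 2)) *
        (\<Prod>j<m. inverse (real (ks ! j) ^ 2))"
      by (simp only: length_Cons length_replicate prod.lessThan_Suc_shift) simp
    then show ?thesis using len by (simp add: w2_def)
  qed
  have "((\<lambda>x. ?F ((\<lambda>(i, ks). Suc (0 + i) # ks) x)) has_sum Zs r m) (Sigma UNIV (\<lambda>i. SL m (0 + i)))"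
  proof (rule has_sum_cong[THEN iffD1, OF _ hs])
    fix x assume x: "x \<in> Sigma UNIV (\<lambda>i. SL m (0 + i))"
    obtain i ks where xi: "x = (i, ks)" by (cases x)
    from x xi have "ks \<in> SL m (0 + i)" by simp
    from eq[OF this] xi show "?f x = ?F ((\<lambda>(i, ks). Suc (0 + i) # ks) x)" by simp
  qed
  then have "(?F has_sum Zs r m) (SL (Suc m) 0)"
    using has_sum_reindex_bij_betw[OF bij_SL] by blast
  then show ?thesis unfolding zeta_star_def set by (rule infsumI)
qed

definition S :: "nat \<Rightarrow> real \<Rightarrow> real" where
  "S k y = (\<Sum>m. T m k * (y^2) ^ m)"

lemma summable_S:
  assumes "y^2 * B0 < 1"
  shows "summable (\<lambda>m. T m k * (y^2) ^ m)"
proof -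
  have B0: "0 \<le> B0" using T_bounds[of 1 0] by simp
  have g: "summable (\<lambda>m. (y^2 * B0) ^ m)"
    by (rule summable_geometric) (use assms B0 in auto)
  have le: "norm (T m k * (y^2) ^ m) \<le> (y^2 * B0) ^ m" for m
  proof -
    have "T m k * (y^2) ^ m \<le> B0 ^ m * (y^2) ^ m"
      by (rule mult_right_mono) (use T_bounds[of m k] in auto)
    then show ?thesis using T_nonneg[of m k] by (simp add: power_mult_distrib mult.commute)
  qed
  show ?thesis by (rule summable_comparison_test'[OF g]) (use le in auto)
qed

lemma S_rec:
  assumes "y^2 * B0 < 1"
  shows "S (Suc k) y = S k y * (1 - y^2 / (real (Suc k))^2)"
proof -
  let ?a = "\<lambda>m. T m k * (y^2) ^ m"
  let ?b = "\<lambda>m. T m (Suc k) * (y^2) ^ m"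
  let ?c = "inverse (real (Suc k) ^ 2)"
  have sa: "summable ?a" and sb: "summable ?b" using summable_S[OF assms] by auto
  have h1: "(\<Sum>m. ?a (Suc m)) = S k y - ?a 0"
    unfolding S_def by (rule suminf_split_head[OF sa])
  have h2: "(\<Sum>m. ?b (Suc m)) = S (Suc k) y - ?b 0"
    unfolding S_def by (rule suminf_split_head[OF sb])
  have h3: "?a (Suc m) = (?c * y^2) * ?a m + ?b (Suc m)" for m
    by (subst T_Suc_diff) (simp add: algebra_simps)
  have sb': "summable (\<lambda>m. ?b (Suc m))" by (rule summable_Suc_iff[of ?b, THEN iffD2, OF sb])
  have "(\<Sum>m. ?a (Suc m)) = (\<Sum>m. (?c * y^2) * ?a m + ?b (Suc m))" by (simp only: h3)
  also have "\<dots> = (\<Sum>m. (?c * y^2) * ?a m) + (\<Sum>m. ?b (Suc m))"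
    by (rule suminf_add[symmetric]) (rule summable_mult[OF sa], rule sb')
  also have "(\<Sum>m. (?c * y^2) * ?a m) = (?c * y^2) * S k y"
    unfolding S_def by (rule suminf_mult[OF sa])
  finally have "S k y - 1 = (?c * y^2) * S k y + S (Suc k) y - 1" using h1 h2 by simp
  then show ?thesis by (simp add: field_simps)
qed

lemma S_ge1:
  assumes "y^2 * B0 < 1"
  shows "1 \<le> S k y"
proof -
  have "(\<Sum>m<1. T m k * (y^2) ^ m) \<le> S k y"
    unfolding S_def by (rule sum_le_suminf[OF summable_S[OF assms]]) (simp_all add: T_nonneg)
  then show ?thesis by simp
qed

lemma S_tendsto:
  assumes "y^2 * B0 < 1"
  shows "(\<lambda>k. S k y) \<longlonglongrightarrow> 1"
proof -
  have B0: "0 \<le> B0" using T_bounds[of 1 0] by simp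
  define q where "q = y^2 * B0"
  have q: "0 \<le> q" "q < 1" using assms B0 by (auto simp: q_def)
  define C where "C = y^2 / (1 - q)"
  have up: "S k y - 1 \<le> C * (\<Sum>i. f0 (k + i))" for k
  proof -
    let ?a = "\<lambda>m. T m k * (y^2) ^ m"
    have sa: "summable ?a" using summable_S[OF assms] .
    have eqS: "(\<Sum>m. ?a (Suc m)) = S k y - 1"
      using suminf_split_head[OF sa] by (simp add: S_def)
    have "?a (Suc m) \<le> (y^2 * (\<Sum>i. f0 (k + i))) * q ^ m" for m
    proof -
      have "?a (Suc m) \<le> (B0 ^ m * (\<Sum>i. f0 (k + i))) * (y^2)^Suc m"
        by (rule mult_right_mono[OF T_Suc_le_tail]) simp
      then show ?thesis by (simp add: q_def power_mult_distrib algebra_simps)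
    qed
    moreover have sa': "summable (\<lambda>m. ?a (Suc m))" by (rule summable_Suc_iff[of ?a, THEN iffD2, OF sa])
    moreover have "summable (\<lambda>m. (y^2 * (\<Sum>i. f0 (k + i))) * q ^ m)"
      by (intro summable_mult summable_geometric) (use q in auto)
    ultimately have "(\<Sum>m. ?a (Suc m)) \<le> (\<Sum>m. (y^2 * (\<Sum>i. f0 (k + i))) * q ^ m)"
      by (intro suminf_le) auto
    also have "\<dots> = (y^2 * (\<Sum>i. f0 (k + i))) / (1 - q)"
      using suminf_geometric[of q] q by (simp add: suminf_mult summable_geometric)
    finally show ?thesis using eqS by (simp add: C_def)
  qed
  have lo: "0 \<le> S k y - 1" for k using S_ge1[OF assms] by simp
  have "(\<lambda>k. C * (\<Sum>i. f0 (k + i))) \<longlonglongrightarrow> C * 0"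
    by (intro tendsto_mult tendsto_const tail_tendsto0)
  then have lim0: "(\<lambda>k. C * (\<Sum>i. f0 (k + i))) \<longlonglongrightarrow> 0" by simp
  have ev1: "eventually (\<lambda>k. 0 \<le> S k y - 1) sequentially" using lo by (intro always_eventually) blast
  have ev2: "eventually (\<lambda>k. S k y - 1 \<le> C * (\<Sum>i. f0 (k + i))) sequentially"
    using up by (intro always_eventually) blast
  have "(\<lambda>k. S k y - 1) \<longlonglongrightarrow> 0"
    by (rule tendsto_sandwich[OF ev1 ev2 tendsto_const lim0])
  then have "(\<lambda>k. S k y - 1 + 1) \<longlonglongrightarrow> 0 + 1" by (intro tendsto_add) auto
  then show ?thesis by simp
qed

definition G :: "nat \<Rightarrow> real \<Rightarrow> real" where
  "G k y = Gamma (real (Suc k) + y) * Gamma (real (Suc k) - y) / (fact k)^2"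

lemma G_rec:
  assumes "\<bar>y\<bar> < 1"
  shows "G (Suc k) y = G k y * (1 - y^2 / (real (Suc k))^2)"
proof -
  have p1: "real (Suc k) + y > 0" "real (Suc k) - y > 0" using assms by auto
  have n1: "real (Suc k) + y \<notin> \<int>\<^sub>\<le>\<^sub>0" "real (Suc k) - y \<notin> \<int>\<^sub>\<le>\<^sub>0"
    using p1 by (auto elim!: nonpos_Ints_cases)
  define a where "a = real (Suc k) + y"
  define b where "b = real (Suc k) - y"
  have ga: "Gamma (a + 1) = a * Gamma a" using Gamma_plus1[OF n1(1)] by (simp add: a_def)
  have gb: "Gamma (b + 1) = b * Gamma b" using Gamma_plus1[OF n1(2)] by (simp add: b_def)
  have e1: "G (Suc k) y = Gamma (a + 1) * Gamma (b + 1) / (fact (Suc k))^2"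
  proof -
    have x1: "real (Suc (Suc k)) + y = a + 1" unfolding a_def by simp
    have x2: "real (Suc (Suc k)) - y = b + 1" unfolding b_def by simp
    show ?thesis by (simp only: G_def x1 x2)
  qed
  have fs: "(fact (Suc k) :: real) = real (Suc k) * fact k" by simp
  have e2: "G k y = Gamma a * Gamma b / (fact k)^2" unfolding G_def a_def b_def by simp
  have ab: "a * b = (real (Suc k))^2 - y^2" unfolding a_def b_def by (simp add: algebra_simps power2_eq_square)
  have nz: "real (Suc k) \<noteq> 0" "(fact k :: real) \<noteq> 0" by auto
  have "G (Suc k) y = (a * b) * (Gamma a * Gamma b) / ((real (Suc k))^2 * (fact k)^2)"
    unfolding e1 ga gb fs power_mult_distrib by (simp only: mult_ac)
  also have "\<dots> = ((real (Suc k))^2 - y^2) / (real (Suc k))^2 * (Gamma a * Gamma b / (fact k)^2)"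
    unfolding ab by simp
  also have "((real (Suc k))^2 - y^2) / (real (Suc k))^2 = 1 - y^2 / (real (Suc k))^2"
    using nz by (simp add: diff_divide_distrib)
  finally show ?thesis unfolding e2 by (simp only: mult_ac)
qed

lemma Gamma_ratio_tendsto:
  assumes "z > (0::real)"
  shows "(\<lambda>n. fact (n - 1) * exp (z * ln (real n)) / Gamma (z + real n)) \<longlonglongrightarrow> 1"
proof -
  have nz: "z \<notin> \<int>\<^sub>\<le>\<^sub>0" using assms by (auto elim!: nonpos_Ints_cases)
  have gz: "Gamma z > 0" using assms by simp
  have "(\<lambda>n. Gamma_series' z n / Gamma z) \<longlonglongrightarrow> Gamma z / Gamma z"
    by (intro tendsto_divide Gamma_series'_LIMSEQ tendsto_const) (use gz in auto)
  moreover have "Gamma_series' z n / Gamma z = fact (n - 1) * exp (z * ln (real n)) / Gamma (z + real n)" for n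
    unfolding Gamma_series'_def using pochhammer_Gamma[OF nz, of n] gz
    by (simp add: field_simps)
  ultimately show ?thesis using gz by simp
qed

lemma G_tendsto:
  assumes "\<bar>y\<bar> < 1"
  shows "(\<lambda>k. G k y) \<longlonglongrightarrow> 1"
proof -
  have a: "(\<lambda>n. fact (n - 1) * exp ((1 + y) * ln (real n)) / Gamma ((1 + y) + real n)) \<longlonglongrightarrow> 1"
    by (rule Gamma_ratio_tendsto) (use assms in auto)
  have b: "(\<lambda>n. fact (n - 1) * exp ((1 - y) * ln (real n)) / Gamma ((1 - y) + real n)) \<longlonglongrightarrow> 1"
    by (rule Gamma_ratio_tendsto) (use assms in auto)
  have "(\<lambda>n. (fact (n - 1) * exp ((1 + y) * ln (real n)) / Gamma ((1 + y) + real n)) *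
             (fact (n - 1) * exp ((1 - y) * ln (real n)) / Gamma ((1 - y) + real n))) \<longlonglongrightarrow> 1 * 1"
    by (rule tendsto_mult[OF a b])
  then have lim1: "(\<lambda>n. (fact (n - 1) * exp ((1 + y) * ln (real n)) / Gamma ((1 + y) + real n)) *
             (fact (n - 1) * exp ((1 - y) * ln (real n)) / Gamma ((1 - y) + real n))) \<longlonglongrightarrow> 1" by simp
  have c: "(\<lambda>n. inverse (G n y)) \<longlonglongrightarrow> 1"
  proof (rule Lim_transform_eventually[OF lim1])
    show "\<forall>\<^sub>F n in sequentially. (fact (n - 1) * exp ((1 + y) * ln (real n)) / Gamma ((1 + y) + real n)) *
             (fact (n - 1) * exp ((1 - y) * ln (real n)) / Gamma ((1 - y) + real n)) = inverse (G n y)"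
      using eventually_gt_at_top[of "0::nat"]
    proof eventually_elim
      case (elim n)
      have e: "exp ((1 + y) * ln (real n)) * exp ((1 - y) * ln (real n)) = real n ^ 2"
      proof -
        have "exp ((1 + y) * ln (real n)) * exp ((1 - y) * ln (real n)) = exp (2 * ln (real n))"
          by (simp add: exp_add[symmetric] algebra_simps)
        also have "2 * ln (real n) = ln (real n ^ 2)" using elim by (simp add: ln_realpow)
        also have "exp (ln (real n ^ 2)) = real n ^ 2" using elim by simp
        finally show ?thesis .
      qed
      have f: "fact n = real n * fact (n - 1)" using elim by (metis fact_reduce of_nat_fact)
      show ?case unfolding G_def using e f
        by (simp add: field_simps power2_eq_square add_ac) 
    qed
  qed
  have "(\<lambda>n. inverse (inverse (G n y))) \<longlonglongrightarrow> inverse 1"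
    by (rule tendsto_inverse[OF c]) simp
  then show ?thesis by simp
qed

lemma G_pos:
  assumes "\<bar>y\<bar> < 1"
  shows "G k y > 0"
  unfolding G_def using assms by (intro divide_pos_pos mult_pos_pos Gamma_real_pos) auto

lemma G_eq_S:
  assumes "\<bar>y\<bar> < 1" "y^2 * B0 < 1"
  shows "G k y = S k y"
proof -
  define Q where "Q k = G k y / S k y" for k
  have Sp: "S k y > 0" for k using S_ge1[OF assms(2), of k] by simp
  have fac: "1 - y^2 / (real (Suc k))^2 \<noteq> 0" for k
  proof -
    have "y^2 < 1" using assms(1) by (simp add: abs_square_less_1)
    also have "1 \<le> (real (Suc k))^2" by simp
    finally show ?thesis by simp
  qed
  have QS: "Q (Suc k) = Q k" for k
    unfolding Q_def G_rec[OF assms(1)] S_rec[OF assms(2)] using fac[of k] by simp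
  have Qc: "Q k = Q 0" for k by (induction k) (simp_all add: QS)
  have "(\<lambda>k. Q k) \<longlonglongrightarrow> 1 / 1"
    unfolding Q_def by (intro tendsto_divide G_tendsto S_tendsto assms) auto
  moreover have "Q = (\<lambda>k. Q 0)" using Qc by auto
  ultimately have "(\<lambda>k. Q 0) \<longlonglongrightarrow> 1" by simp
  then have "Q 0 = 1" by (simp add: LIMSEQ_const_iff)
  then show ?thesis using Qc[of k] Sp[of k] by (simp add: Q_def)
qed

definition Fr :: "nat \<Rightarrow> real \<Rightarrow> real" where
  "Fr r y = (\<Sum>k. G k y / real (Suc k) ^ (r + 2))"

lemma G_le_G0:
  assumes "\<bar>y\<bar> < 1"
  shows "G k y \<le> G 0 y"
proof (induction k)
  case 0 then show ?case by simp
next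
  case (Suc k)
  have "y^2 / (real (Suc k))^2 \<ge> 0" by simp
  then have "G k y * (1 - y^2 / (real (Suc k))^2) \<le> G k y"
    using G_pos[OF assms, of k] by (simp add: mult_le_cancel_left1)
  then show ?case using Suc G_rec[OF assms, of k] by simp
qed

lemma summable_Fr:
  assumes "\<bar>y\<bar> < 1"
  shows "summable (\<lambda>k. G k y / real (Suc k) ^ (r + 2))"
proof -
  have le: "norm (G k y / real (Suc k) ^ (r + 2)) \<le> G 0 y * f0 k" for k
  proof -
    have a: "inverse (real (Suc k) ^ (r + 2)) \<le> f0 k"
      unfolding f0_def by (intro le_imp_inverse_le power_increasing) auto
    have "G k y * inverse (real (Suc k) ^ (r + 2)) \<le> G 0 y * f0 k"
      by (rule mult_mono[OF G_le_G0[OF assms] a]) (use G_pos[OF assms, of 0] in auto)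
    then show ?thesis using G_pos[OF assms, of k] by (simp add: divide_inverse)
  qed
  show ?thesis
    by (rule summable_comparison_test'[OF summable_mult[OF summable_f0]]) (use le in auto)
qed

lemma Fr_series:
  assumes "\<bar>y\<bar> < 1" "y^2 * B0 < 1"
  shows "(\<lambda>m. Zs r m * (y^2) ^ m) sums Fr r y"
proof -
  define a where "a = (\<lambda>(k, m). inverse (real (Suc k) ^ (r + 2)) * (T m k * (y^2) ^ m))"
  have anm: "0 \<le> a x" for x unfolding a_def by (cases x) (simp add: T_nonneg)
  have "(a has_sum Fr r y) (Sigma UNIV (\<lambda>_. UNIV))"
  proof (rule has_sum_Sigma_nonneg)
    fix k
    have "(\<lambda>m. T m k * (y^2) ^ m) sums S k y"
      unfolding S_def by (rule summable_sums[OF summable_S[OF assms(2)]])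
    then have "((\<lambda>m. T m k * (y^2) ^ m) has_sum S k y) UNIV"
      by (rule sums_nonneg_imp_has_sum) (simp add: T_nonneg)
    from has_sum_cmult_right[OF this, of "inverse (real (Suc k) ^ (r + 2))"]
    show "((\<lambda>m. a (k, m)) has_sum G k y / real (Suc k) ^ (r + 2)) UNIV"
      using G_eq_S[OF assms, of k] by (simp add: a_def divide_inverse mult.commute)
  next
    show "(\<lambda>k. G k y / real (Suc k) ^ (r + 2)) sums Fr r y"
      unfolding Fr_def by (rule summable_sums[OF summable_Fr[OF assms(1)]])
  qed (rule anm)
  then have sw: "((\<lambda>(m, k). a (k, m)) has_sum Fr r y) (UNIV \<times> UNIV)"
    by (subst (asm) has_sum_swap) simp
  have inner: "((\<lambda>k. a (k, m)) has_sum Zs r m * (y^2) ^ m) UNIV" for m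
  proof -
    have "(\<lambda>k. inverse (real (Suc k) ^ (r + 2)) * T m k) sums Zs r m"
      unfolding Zs_def by (rule summable_sums[OF summable_Zs])
    then have "(\<lambda>k. inverse (real (Suc k) ^ (r + 2)) * T m k * (y^2) ^ m) sums (Zs r m * (y^2) ^ m)"
      by (rule sums_mult2)
    then have "((\<lambda>k. inverse (real (Suc k) ^ (r + 2)) * T m k * (y^2) ^ m) has_sum (Zs r m * (y^2) ^ m)) UNIV"
      by (rule sums_nonneg_imp_has_sum) (simp add: T_nonneg)
    then show ?thesis
      by (simp add: a_def mult.assoc)
  qed
  have "((\<lambda>m. Zs r m * (y^2) ^ m) has_sum Fr r y) UNIV"
    using has_sum_Sigma'[OF sw, of "\<lambda>m. Zs r m * (y^2) ^ m"] inner by simp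
  then show ?thesis by (rule has_sum_imp_sums)
qed

lemma Fr_powser:
  assumes "\<bar>y\<bar> < 1" "y^2 * B0 < 1"
  shows "(\<lambda>n. (if even n then Zs r (n div 2) else 0) * y ^ n) sums Fr r y"
proof -
  have "(\<lambda>n. if even n then Zs r (n div 2) * (y^2) ^ (n div 2) else (\<lambda>_. 0) ((n - 1) div 2)) sums (0 + Fr r y)"
    by (rule sums_if[OF sums_zero Fr_series[OF assms]])
  moreover have "(if even n then Zs r (n div 2) * (y^2) ^ (n div 2) else (\<lambda>_. 0) ((n - 1) div 2)) =
      (if even n then Zs r (n div 2) else 0) * y ^ n" for n
    by (auto simp: power_mult[symmetric] elim!: evenE)
  ultimately show ?thesis by simp
qed

lemma FTC_Ico_at_left:
  fixes f F :: "real \<Rightarrow> real"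
  assumes f_borel: "f \<in> borel_measurable borel"
  assumes ab: "a < b"
  assumes f: "\<And>x. a \<le> x \<Longrightarrow> x < b \<Longrightarrow> DERIV F x :> f x"
  assumes nonneg: "\<And>x. a \<le> x \<Longrightarrow> x < b \<Longrightarrow> 0 \<le> f x"
  assumes lim: "(F \<longlongrightarrow> Tl) (at_left b)"
  shows "(\<integral>\<^sup>+x. ennreal (f x) * indicator {a..<b} x \<partial>lborel) = ennreal (Tl - F a)"
proof -
  define s where "s n = b - (b - a) / real (Suc (Suc n))" for n
  have s_ge: "a < s n" for n
  proof -
    have "(b - a) / real (Suc (Suc n)) < b - a" using ab by (simp add: divide_less_eq)
    then show ?thesis by (simp add: s_def)
  qed
  have s_lt: "s n < b" for n using ab by (simp add: s_def)
  have s_mono: "s n \<le> s m" if "n \<le> m" for n m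
    unfolding s_def using ab that by (intro diff_left_mono divide_left_mono) auto
  have s_lim: "s \<longlonglongrightarrow> b"
  proof -
    have "(\<lambda>n. (b - a) / real (Suc (Suc n))) \<longlonglongrightarrow> 0"
      by real_asymp
    then have "(\<lambda>n. b - (b - a) / real (Suc (Suc n))) \<longlonglongrightarrow> b - 0"
      by (intro tendsto_diff tendsto_const)
    then show ?thesis unfolding s_def[abs_def] by simp
  qed
  have s_left: "filterlim s (at_left b) sequentially"
    by (rule tendsto_imp_filterlim_at_left[OF s_lim]) (use s_lt in \<open>auto intro: always_eventually\<close>)
  let ?f = "\<lambda>(i::nat) (x::real). ennreal (f x) * indicator {a..s i} x"
  let ?fR = "\<lambda>x. ennreal (f x) * indicator {a..<b} x"
  have F_mono: "F x \<le> F y" if xy: "a \<le> x" "x \<le> y" "y < b" for x y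
  proof (rule DERIV_nonneg_imp_nondecreasing[of x y F])
    show "x \<le> y" by fact
    fix t assume t: "x \<le> t" "t \<le> y"
    with xy have "a \<le> t" "t < b" by auto
    then show "\<exists>d. DERIV F t :> d \<and> d \<ge> 0" using f nonneg by blast
  qed
  have F_le_T: "a \<le> x \<Longrightarrow> x < b \<Longrightarrow> F x \<le> Tl" for x
    by (intro tendsto_lowerbound[OF lim])
       (auto simp: eventually_at_left_field intro!: exI[of _ x] F_mono)
  have "(SUP i. ?f i x) = ?fR x" for x
  proof (rule LIMSEQ_unique[OF LIMSEQ_SUP])
    show "incseq (\<lambda>i. ?f i x)"
      by (auto simp: incseq_def le_fun_def split: split_indicator dest: s_mono)
    show "(\<lambda>i. ?f i x) \<longlonglongrightarrow> ?fR x"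
    proof (cases "a \<le> x \<and> x < b")
      case True
      then have "eventually (\<lambda>n. x < s n) sequentially"
        using order_tendstoD(1)[OF s_lim, of x] by auto
      then have "eventually (\<lambda>n. ?f n x = ?fR x) sequentially"
        by eventually_elim (use True in \<open>auto split: split_indicator\<close>)
      then show ?thesis by (rule tendsto_eventually)
    next
      case False
      then have "?f n x = ?fR x" for n using s_lt[of n] by (auto split: split_indicator)
      then show ?thesis by simp
    qed
  qed
  then have "integral\<^sup>N lborel ?fR = (\<integral>\<^sup>+ x. (SUP i. ?f i x) \<partial>lborel)"
    by simp
  also have "\<dots> = (SUP i. (\<integral>\<^sup>+ x. ?f i x \<partial>lborel))"
  proof (rule nn_integral_monotone_convergence_SUP)
    show "incseq ?f"
      by (auto simp: incseq_def le_fun_def split: split_indicator dest: s_mono)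
    show "\<And>i. (?f i) \<in> borel_measurable lborel"
      using f_borel by auto
  qed
  also have "\<dots> = (SUP i. ennreal (F (s i) - F a))"
  proof -
    have "(\<integral>\<^sup>+ x. ?f i x \<partial>lborel) = ennreal (F (s i) - F a)" for i
      by (rule nn_integral_FTC_Icc[OF f_borel]) (use s_ge[of i] s_lt[of i] f nonneg in auto)
    then show ?thesis by simp
  qed
  also have "\<dots> = ennreal (Tl - F a)"
  proof (rule LIMSEQ_unique[OF LIMSEQ_SUP])
    have "(\<lambda>n. F (s n)) \<longlonglongrightarrow> Tl"
      by (rule filterlim_compose[OF lim s_left])
    then show "(\<lambda>n. ennreal (F (s n) - F a)) \<longlonglongrightarrow> ennreal (Tl - F a)"
      by (intro tendsto_ennrealI tendsto_diff tendsto_const)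
    show "incseq (\<lambda>i. ennreal (F (s i) - F a))"
      unfolding incseq_def
      by (auto intro!: ennreal_leI diff_right_mono F_mono s_mono less_imp_le[OF s_ge] s_lt)
  qed
  finally show ?thesis .
qed

lemma lim_u_log_pow:
  "((\<lambda>u. u * (C - ln u) ^ j) \<longlongrightarrow> (0::real)) (at_right 0)"
proof -
  have t: "filterlim (\<lambda>u::real. C - ln u) at_top (at_right 0)" by real_asymp
  have "((\<lambda>u. (C - ln u) ^ j / exp (C - ln u)) \<longlongrightarrow> 0) (at_right 0)"
    by (rule filterlim_compose[OF tendsto_power_div_exp_0 t])
  then have "((\<lambda>u. exp C * ((C - ln u) ^ j / exp (C - ln u))) \<longlongrightarrow> exp C * 0) (at_right 0)"
    by (intro tendsto_mult tendsto_const)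
  then have l: "((\<lambda>u. exp C * ((C - ln u) ^ j / exp (C - ln u))) \<longlongrightarrow> 0) (at_right 0)" by simp
  show ?thesis
  proof (rule Lim_transform_eventually[OF l])
    show "\<forall>\<^sub>F u in at_right 0. exp C * ((C - ln u) ^ j / exp (C - ln u)) = u * (C - ln u) ^ j"
      using eventually_at_right_less[of "0::real"]
    proof eventually_elim
      case (elim u)
      then have "exp (C - ln u) = exp C / u" by (simp add: exp_diff)
      then show ?case using elim by (simp add: field_simps)
    qed
  qed
qed

fun Pant :: "real \<Rightarrow> nat \<Rightarrow> nat \<Rightarrow> real \<Rightarrow> real" where
  "Pant c k 0 b = (- ((1 - b) ^ (k + 1))) / real (k + 1)"
| "Pant c k (Suc r) b = (- ((1 - b) ^ (k + 1) * (ln c - ln (1 - b)) ^ Suc r)) / real (k + 1)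
      + real (Suc r) / real (k + 1) * Pant c k r b"

lemma Pant_deriv:
  assumes b1: "b < 1"
  shows "DERIV (Pant c k r) b :> (ln c - ln (1 - b)) ^ r * (1 - b) ^ k"
proof -
  have d0: "DERIV (\<lambda>b. 1 - b) b :> 0 - 1" by (intro derivative_intros)
  have "DERIV (\<lambda>b. (1 - b) ^ Suc k) b :> (1 + real k) * ((0 - 1) * (1 - b) ^ k)"
    by (rule DERIV_power_Suc[OF d0])
  then have dU: "DERIV (\<lambda>b. (1 - b) ^ (k + 1)) b :> - (real (k + 1) * (1 - b) ^ k)"
    by (simp add: algebra_simps)
  have dl: "DERIV (\<lambda>b. ln (1 - b)) b :> (0 - 1) / (1 - b)"
    using b1 by (auto intro!: derivative_eq_intros)
  have dL: "DERIV (\<lambda>b. ln c - ln (1 - b)) b :> 1 / (1 - b)"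
    using DERIV_diff[OF DERIV_const[of "ln c"] dl] by simp
  have nz: "1 - b \<noteq> 0" using b1 by simp
  show ?thesis
  proof (induction r)
    case 0
    from DERIV_cdivide[OF DERIV_minus[OF dU], of "real (k + 1)"]
    show ?case by simp
  next
    case (Suc r)
    define X where "X = (1 - b) ^ k"
    define Y where "Y = (ln c - ln (1 - b)) ^ r"
    define Z where "Z = ln c - ln (1 - b)"
    have dLp: "DERIV (\<lambda>b. (ln c - ln (1 - b)) ^ Suc r) b :> (1 + real r) * (1 / (1 - b) * (ln c - ln (1 - b)) ^ r)"
      by (rule DERIV_power_Suc[OF dL])
    have dm: "DERIV (\<lambda>b. (1 - b) ^ (k + 1) * (ln c - ln (1 - b)) ^ Suc r) b :>
        - (real (k + 1) * (1 - b) ^ k) * (ln c - ln (1 - b)) ^ Suc r + (1 + real r) * (1 / (1 - b) * (ln c - ln (1 - b)) ^ r) * (1 - b) ^ (k + 1)"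
      by (rule DERIV_mult[OF dU dLp])
    note d1 = DERIV_add[OF DERIV_cdivide[OF DERIV_minus[OF dm], of "real (k + 1)"] DERIV_cmult[OF Suc, of "real (Suc r) / real (k + 1)"]]
    have e: "(- (- (real (k + 1) * X) * (Z * Y) + (1 + real r) * (1 / (1 - b) * Y) * (X * (1 - b)))) / real (k + 1)
          + real (Suc r) / real (k + 1) * (Y * X) = (Z * Y) * X"
    proof -
      have e1: "(1 + real r) * (1 / (1 - b) * Y) * (X * (1 - b)) = (1 + real r) * (X * Y)"
        using nz by (simp add: field_simps)
      have kn: "real (k + 1) \<noteq> 0" by simp
      have "(- (- (real (k + 1) * X) * (Z * Y) + (1 + real r) * (X * Y))) / real (k + 1)
          + real (Suc r) / real (k + 1) * (Y * X)
          = (real (k + 1) * (X * (Z * Y)) - (1 + real r) * (X * Y) + real (Suc r) * (Y * X)) / real (k + 1)"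
        by (simp add: add_divide_distrib diff_divide_distrib algebra_simps)
      also have "\<dots> = (real (k + 1) * (X * (Z * Y))) / real (k + 1)"
        by (simp add: algebra_simps)
      also have "\<dots> = (Z * Y) * X" using kn by simp
      finally show ?thesis unfolding e1 .
    qed
    have e2: "(ln c - ln (1 - b)) ^ Suc r = Z * Y" "(1 - b) ^ (k + 1) = X * (1 - b)"
      by (simp_all add: X_def Y_def Z_def)
    have fe: "Pant c k (Suc r) = (\<lambda>b. (- ((1 - b) ^ (k + 1) * (ln c - ln (1 - b)) ^ Suc r)) / real (k + 1)
      + real (Suc r) / real (k + 1) * Pant c k r b)"
      by (rule ext) simp
    show ?case unfolding fe
    proof (rule DERIV_cong[OF d1])
      show "- (- (real (k + 1) * (1 - b) ^ k) * (ln c - ln (1 - b)) ^ Suc r +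
          (1 + real r) * (1 / (1 - b) * (ln c - ln (1 - b)) ^ r) * (1 - b) ^ (k + 1)) / real (k + 1) +
          real (Suc r) / real (k + 1) * ((ln c - ln (1 - b)) ^ r * (1 - b) ^ k) =
          (ln c - ln (1 - b)) ^ Suc r * (1 - b) ^ k"
        unfolding e2 X_def[symmetric] Y_def[symmetric] by (rule e)
    qed
  qed
qed

lemma Pant_at1: "Pant c k r 1 = 0" by (induction r) auto

lemma Pant_at: "Pant (1 - a) k r a = - fact r * (1 - a) ^ (k + 1) / real (k + 1) ^ (r + 1)"
proof (induction r)
  case 0 then show ?case by simp
next
  case (Suc r)
  have "Pant (1 - a) k (Suc r) a = real (Suc r) / real (k + 1) * Pant (1 - a) k r a" by simp
  also have "\<dots> = real (Suc r) / real (k + 1) * (- fact r * (1 - a) ^ (k + 1) / real (k + 1) ^ (r + 1))"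
    by (simp only: Suc)
  also have "\<dots> = - fact (Suc r) * (1 - a) ^ (k + 1) / real (k + 1) ^ (Suc r + 1)"
    by (simp add: field_simps)
  finally show ?case .
qed

lemma Pant_lim:
  assumes "c > 0"
  shows "((Pant c k r) \<longlongrightarrow> 0) (at_left 1)"
proof -
  have u: "filterlim (\<lambda>b::real. 1 - b) (at_right 0) (at_left 1)" by real_asymp
  have key: "((\<lambda>b. (1 - b) ^ (k + 1) * (ln c - ln (1 - b)) ^ j) \<longlongrightarrow> 0) (at_left 1)" for j
  proof -
    have "((\<lambda>b. (1 - b) * (ln c - ln (1 - b)) ^ j) \<longlongrightarrow> 0) (at_left 1)"
      by (rule filterlim_compose[OF lim_u_log_pow u])
    moreover have "((\<lambda>b. (1 - b) ^ k) \<longlongrightarrow> (1 - 1) ^ k) (at_left (1::real))"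
      by (intro tendsto_intros)
    ultimately have "((\<lambda>b. (1 - b) ^ k * ((1 - b) * (ln c - ln (1 - b)) ^ j)) \<longlongrightarrow> (1 - 1) ^ k * 0) (at_left 1)"
      by (intro tendsto_mult)
    then show ?thesis by (simp add: mult_ac)
  qed
  show ?thesis
  proof (induction r)
    case 0
    have "((\<lambda>b. (- ((1 - b) ^ (k + 1))) / real (k + 1)) \<longlongrightarrow> (- ((1 - 1) ^ (k + 1))) / real (k + 1)) (at_left (1::real))"
      by (intro tendsto_intros) auto
    then show ?case by simp
  next
    case (Suc r)
    have "((\<lambda>b. (- ((1 - b) ^ (k + 1) * (ln c - ln (1 - b)) ^ Suc r)) / real (k + 1)
      + real (Suc r) / real (k + 1) * Pant c k r b) \<longlongrightarrow> (- 0) / real (k + 1) + real (Suc r) / real (k + 1) * 0) (at_left 1)"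
      by (intro tendsto_add tendsto_mult tendsto_divide tendsto_minus key Suc tendsto_const) auto
    then show ?case by simp
  qed
qed

lemma lemmaL:
  assumes "a < 1"
  shows "(\<integral>\<^sup>+ b. ennreal ((ln ((1 - a) / (1 - b))) ^ r * (1 - b) ^ k) * indicator {a<..<1} b \<partial>lborel)
       = ennreal (fact r * (1 - a) ^ (k + 1) / real (k + 1) ^ (r + 1))"
proof -
  define c where "c = 1 - a"
  have c: "c > 0" using assms by (simp add: c_def)
  define g where "g b = (ln c - ln (1 - b)) ^ r * (1 - b) ^ k" for b
  have "(\<integral>\<^sup>+ b. ennreal ((ln ((1 - a) / (1 - b))) ^ r * (1 - b) ^ k) * indicator {a<..<1} b \<partial>lborel)
      = (\<integral>\<^sup>+ b. ennreal (g b) * indicator {a..<1} b \<partial>lborel)"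
  proof (rule nn_integral_cong_AE)
    show "AE b in lborel. ennreal ((ln ((1 - a) / (1 - b))) ^ r * (1 - b) ^ k) * indicator {a<..<1} b
        = ennreal (g b) * indicator {a..<1} b"
      using AE_lborel_singleton[of a]
    proof eventually_elim
      case (elim b)
      show ?case
      proof (cases "a < b \<and> b < 1")
        case True
        then have "ln ((1 - a) / (1 - b)) = ln c - ln (1 - b)" using c by (simp add: c_def ln_div)
        then show ?thesis using True by (simp add: g_def)
      next
        case False
        then show ?thesis using elim by (auto split: split_indicator)
      qed
    qed
  qed
  also have "\<dots> = ennreal (0 - Pant c k r a)"
  proof (rule FTC_Ico_at_left)
    show "g \<in> borel_measurable borel" unfolding g_def by measurable
    show "a < 1" by fact
    show "\<And>x. a \<le> x \<Longrightarrow> x < 1 \<Longrightarrow> DERIV (Pant c k r) x :> g x"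
      unfolding g_def by (rule Pant_deriv)
    show "\<And>x. a \<le> x \<Longrightarrow> x < 1 \<Longrightarrow> 0 \<le> g x"
    proof -
      fix x assume x: "a \<le> x" "x < 1"
      then have "ln (1 - x) \<le> ln c" using c by (simp add: c_def)
      then show "0 \<le> g x" unfolding g_def using x by simp
    qed
    show "(Pant c k r \<longlongrightarrow> 0) (at_left 1)" by (rule Pant_lim[OF c])
  qed
  also have "0 - Pant c k r a = fact r * (1 - a) ^ (k + 1) / real (k + 1) ^ (r + 1)"
    using Pant_at[of a k r] by (simp add: c_def)
  finally show ?thesis .
qed

definition cf :: "real \<Rightarrow> nat \<Rightarrow> real" where
  "cf y k = pochhammer (y + 1) k / fact k"

lemma cf_nonneg: "\<bar>y\<bar> < 1 \<Longrightarrow> 0 \<le> cf y k"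
  unfolding cf_def by (intro divide_nonneg_pos pochhammer_nonneg) auto

lemma powr_expansion:
  assumes "0 < b" "b < 2"
  shows "(\<lambda>k. cf y k * (1 - b) ^ k) sums (b powr (- y - 1))"
proof -
  have "\<bar>b - 1\<bar> < 1" using assms by auto
  from gen_binomial_real[OF this, of "- y - 1"]
  have "(\<lambda>n. ((- y - 1) gchoose n) * (b - 1) ^ n) sums (1 + (b - 1)) powr (- y - 1)" .
  moreover have "((- y - 1) gchoose n) * (b - 1) ^ n = cf y n * (1 - b) ^ n" for n
  proof -
    have "((- y - 1) gchoose n) * (b - 1) ^ n = ((-1) ^ n * (b - 1) ^ n) * (pochhammer (y + 1) n / fact n)"
      by (simp add: gbinomial_pochhammer algebra_simps)
    also have "(-1) ^ n * (b - 1) ^ n = (1 - b) ^ n"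
      by (simp add: power_mult_distrib[symmetric])
    finally show ?thesis by (simp add: cf_def mult.commute)
  qed
  ultimately show ?thesis by simp
qed

definition hy :: "nat \<Rightarrow> real \<Rightarrow> real \<times> real \<Rightarrow> real" where
  "hy r y z = (case z of (a, b) \<Rightarrow>
     (ln ((1 - a) / (1 - b))) ^ r * a powr y * (1 - a) powr (- y - 1) * b powr (- y - 1))"

lemma E2_iff: "(a, b) \<in> E2 \<longleftrightarrow> 0 < a \<and> a < b \<and> b < 1"
  by (simp add: E2_def)

lemma inner_integral:
  assumes y: "\<bar>y\<bar> < 1"
  shows "(\<integral>\<^sup>+ b. ennreal (indicator E2 (a, b) * hy r y (a, b)) \<partial>lborel) =
    (\<Sum>k. ennreal (cf y k * fact r / real (k + 1) ^ (r + 1) * indicator {0<..<1} a * (a powr y * (1 - a) powr (real k - y))))"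
proof (cases "0 < a \<and> a < 1")
  case False
  then have "indicator E2 (a, b) = (0::real)" for b by (auto simp: E2_iff)
  moreover have "indicator {0<..<1} a = (0::real)" using False by auto
  ultimately show ?thesis by simp
next
  case True
  then have a0: "0 < a" and a1: "a < 1" by auto
  define Ca where "Ca = a powr y * (1 - a) powr (- y - 1)"
  have Ca: "0 \<le> Ca" by (simp add: Ca_def)
  define L where "L b = (ln ((1 - a) / (1 - b))) ^ r" for b
  have "(\<integral>\<^sup>+ b. ennreal (indicator E2 (a, b) * hy r y (a, b)) \<partial>lborel) =
      (\<integral>\<^sup>+ b. (\<Sum>k. ennreal (Ca * cf y k) * (ennreal (L b * (1 - b) ^ k) * indicator {a<..<1} b)) \<partial>lborel)"
  proof (rule nn_integral_cong)
    fix b :: real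
    show "ennreal (indicator E2 (a, b) * hy r y (a, b)) =
      (\<Sum>k. ennreal (Ca * cf y k) * (ennreal (L b * (1 - b) ^ k) * indicator {a<..<1} b))"
    proof (cases "a < b \<and> b < 1")
      case False
      then show ?thesis by (auto simp: E2_iff)
    next
      case True
      have L: "0 \<le> L b"
      proof -
        have "1 \<le> (1 - a) / (1 - b)" using True by (simp add: field_simps)
        then show ?thesis by (simp add: L_def)
      qed
      have "(\<lambda>k. cf y k * (1 - b) ^ k) sums (b powr (- y - 1))"
        by (rule powr_expansion) (use True a0 in auto)
      then have "(\<lambda>k. (Ca * L b) * (cf y k * (1 - b) ^ k)) sums ((Ca * L b) * b powr (- y - 1))"
        by (rule sums_mult)
      then have "(\<Sum>k. ennreal ((Ca * L b) * (cf y k * (1 - b) ^ k))) = ennreal ((Ca * L b) * b powr (- y - 1))"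
        by (rule suminf_ennreal_eq[rotated]) (use Ca L True cf_nonneg[OF y] in auto)
      moreover have "ennreal ((Ca * L b) * (cf y k * (1 - b) ^ k)) = ennreal (Ca * cf y k) * (ennreal (L b * (1 - b) ^ k) * indicator {a<..<1} b)" for k
        using True a0 Ca L cf_nonneg[OF y, of k] by (simp add: ennreal_mult'[symmetric] mult_ac)
      moreover have "indicator E2 (a, b) * hy r y (a, b) = (Ca * L b) * b powr (- y - 1)"
        using True a0 by (simp add: E2_iff hy_def Ca_def L_def mult_ac)
      ultimately show ?thesis by simp
    qed
  qed
  also have "\<dots> = (\<Sum>k. \<integral>\<^sup>+ b. ennreal (Ca * cf y k) * (ennreal (L b * (1 - b) ^ k) * indicator {a<..<1} b) \<partial>lborel)"
    by (rule nn_integral_suminf) (simp add: L_def)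
  also have "\<dots> = (\<Sum>k. ennreal (Ca * cf y k) * ennreal (fact r * (1 - a) ^ (k + 1) / real (k + 1) ^ (r + 1)))"
  proof (rule suminf_cong)
    fix k
    have "(\<integral>\<^sup>+ b. ennreal (Ca * cf y k) * (ennreal (L b * (1 - b) ^ k) * indicator {a<..<1} b) \<partial>lborel)
        = ennreal (Ca * cf y k) * (\<integral>\<^sup>+ b. ennreal (L b * (1 - b) ^ k) * indicator {a<..<1} b \<partial>lborel)"
      by (rule nn_integral_cmult) (simp add: L_def)
    also have "(\<integral>\<^sup>+ b. ennreal (L b * (1 - b) ^ k) * indicator {a<..<1} b \<partial>lborel)
        = ennreal (fact r * (1 - a) ^ (k + 1) / real (k + 1) ^ (r + 1))"
      unfolding L_def by (rule lemmaL[OF a1])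
    finally show "(\<integral>\<^sup>+ b. ennreal (Ca * cf y k) * (ennreal (L b * (1 - b) ^ k) * indicator {a<..<1} b) \<partial>lborel)
        = ennreal (Ca * cf y k) * ennreal (fact r * (1 - a) ^ (k + 1) / real (k + 1) ^ (r + 1))" .
  qed
  also have "\<dots> = (\<Sum>k. ennreal (cf y k * fact r / real (k + 1) ^ (r + 1) * indicator {0<..<1} a * (a powr y * (1 - a) powr (real k - y))))"
  proof (rule suminf_cong)
    fix k
    have pw: "(1 - a) powr (- y - 1) * (1 - a) ^ (k + 1) = (1 - a) powr (real k - y)"
    proof -
      have "(1 - a) ^ (k + 1) = (1 - a) powr (real (k + 1))" by (rule powr_realpow[symmetric]) (use a1 in simp)
      then have "(1 - a) powr (- y - 1) * (1 - a) ^ (k + 1) = (1 - a) powr (- y - 1 + real (k + 1))"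
        by (simp only: powr_add)
      also have "\<dots> = (1 - a) powr (real k - y)"
        by (rule arg_cong[where f="\<lambda>t. (1 - a) powr t"]) simp
      finally show ?thesis .
    qed
    have "ennreal (Ca * cf y k) * ennreal (fact r * (1 - a) ^ (k + 1) / real (k + 1) ^ (r + 1))
        = ennreal ((Ca * cf y k) * (fact r * (1 - a) ^ (k + 1) / real (k + 1) ^ (r + 1)))"
      by (rule ennreal_mult[symmetric]) (use Ca cf_nonneg[OF y, of k] a1 in auto)
    also have "(Ca * cf y k) * (fact r * (1 - a) ^ (k + 1) / real (k + 1) ^ (r + 1))
        = cf y k * fact r / real (k + 1) ^ (r + 1) * indicator {0<..<1} a * (a powr y * ((1 - a) powr (- y - 1) * (1 - a) ^ (k + 1)))"
      using True by (simp add: Ca_def)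
    also have "\<dots> = cf y k * fact r / real (k + 1) ^ (r + 1) * indicator {0<..<1} a * (a powr y * (1 - a) powr (real k - y))"
      by (simp only: pw)
    finally show "ennreal (Ca * cf y k) * ennreal (fact r * (1 - a) ^ (k + 1) / real (k + 1) ^ (r + 1)) =
        ennreal (cf y k * fact r / real (k + 1) ^ (r + 1) * indicator {0<..<1} a * (a powr y * (1 - a) powr (real k - y)))" .
  qed
  finally show ?thesis .
qed

lemma open_E2: "open E2"
proof -
  have eq: "E2 = {z. 0 < fst z} \<inter> {z. fst z < snd z} \<inter> {z. snd z < (1::real)}"
    by (auto simp: E2_def)
  show ?thesis unfolding eq by (intro open_Int open_Collect_less continuous_intros)
qed

lemma E2_borel[measurable]: "E2 \<in> sets borel"
  using open_E2 by (rule borel_open)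

lemma hy_alt: "hy r y = (\<lambda>z. (ln ((1 - fst z) / (1 - snd z))) ^ r * fst z powr y * (1 - fst z) powr (- y - 1) * snd z powr (- y - 1))"
  by (auto simp: hy_def fun_eq_iff split: prod.splits)

lemma E2_sets_pair[measurable]: "E2 \<in> sets (lborel \<Otimes>\<^sub>M lborel)"
  unfolding lborel_prod using E2_borel by simp

lemma meas_hy2[measurable]: "hy r y \<in> borel_measurable (lborel \<Otimes>\<^sub>M lborel)"
  unfolding hy_alt by measurable

lemma meas_F2: "(\<lambda>z. ennreal (indicator E2 z * hy r y z)) \<in> borel_measurable (lborel \<Otimes>\<^sub>M lborel)"
  by measurable


lemma beta_nn:
  assumes y: "\<bar>y\<bar> < 1"
  shows "(\<integral>\<^sup>+ a. ennreal (indicator {0<..<1} a * (a powr y * (1 - a) powr (real k - y))) \<partial>lborel)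
       = ennreal (Beta (y + 1) (real k + 1 - y))"
proof -
  have "((\<lambda>t. t powr (y + 1 - 1) * (1 - t) powr (real k + 1 - y - 1)) has_integral Beta (y + 1) (real k + 1 - y)) {0..1}"
    by (rule has_integral_Beta_real) (use y in auto)
  then have hi: "((\<lambda>t. t powr y * (1 - t) powr (real k - y)) has_integral Beta (y + 1) (real k + 1 - y)) {0..1}"
    by simp
  have "(\<integral>\<^sup>+ a. ennreal (indicator {0..1} a * (a powr y * (1 - a) powr (real k - y))) \<partial>lborel)
      = ennreal (Beta (y + 1) (real k + 1 - y))"
    by (rule nn_integral_has_integral_lebesgue[OF _ hi]) simp
  moreover have "(\<integral>\<^sup>+ a. ennreal (indicator {0<..<1} a * (a powr y * (1 - a) powr (real k - y))) \<partial>lborel)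
      = (\<integral>\<^sup>+ a. ennreal (indicator {0..1} a * (a powr y * (1 - a) powr (real k - y))) \<partial>lborel)"
  proof (rule nn_integral_cong_AE)
    show "AE a in lborel. ennreal (indicator {0<..<1} a * (a powr y * (1 - a) powr (real k - y))) =
        ennreal (indicator {0..1} a * (a powr y * (1 - a) powr (real k - y)))"
      using AE_lborel_singleton[of 0] AE_lborel_singleton[of 1]
      by eventually_elim (auto split: split_indicator)
  qed
  ultimately show ?thesis by simp
qed

lemma coef_identity:
  assumes y: "\<bar>y\<bar> < 1"
  shows "cf y k * fact r / real (k + 1) ^ (r + 1) * Beta (y + 1) (real k + 1 - y)
       = fact r * G k y / real (Suc k) ^ (r + 2)"
proof -
  have ny: "y + 1 \<notin> \<int>\<^sub>\<le>\<^sub>0" using y by (auto elim!: nonpos_Ints_cases)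
  have p: "pochhammer (y + 1) k = Gamma (y + 1 + real k) / Gamma (y + 1)"
    by (rule pochhammer_Gamma[OF ny])
  have g2: "Gamma (y + 1 + (real k + 1 - y)) = fact (Suc k)"
  proof -
    have "y + 1 + (real k + 1 - y) = 1 + real (Suc k)" by simp
    then show ?thesis using Gamma_fact[of "Suc k"] by (simp only:)
  qed
  have Bt: "Beta (y + 1) (real k + 1 - y) = Gamma (y + 1) * Gamma (real k + 1 - y) / fact (Suc k)"
    unfolding Beta_def g2 ..
  have gy: "Gamma (y + 1) > 0" using y by (intro Gamma_real_pos) auto
  have a1: "real (Suc k) + y = y + 1 + real k" by simp
  have a2: "real (Suc k) - y = real k + 1 - y" by simp
  have G: "G k y = Gamma (y + 1 + real k) * Gamma (real k + 1 - y) / (fact k)^2"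
    unfolding G_def by (simp only: a1 a2)
  have fs: "(fact (Suc k) :: real) = real (Suc k) * fact k" by simp
  have fk: "(fact k :: real) \<noteq> 0" by simp
  have nk: "real (Suc k) \<noteq> 0" by simp
  have pw: "real (Suc k) ^ (r + 2) = real (Suc k) ^ (r + 1) * real (Suc k)" by simp
  have gen: "\<And>A Bv g f n fr :: real. g \<noteq> 0 \<Longrightarrow> f \<noteq> 0 \<Longrightarrow> n \<noteq> 0 \<Longrightarrow>
      (A / g) / f * fr / n ^ (r + 1) * (g * Bv / (n * f)) = fr * (A * Bv / f^2) / (n ^ (r + 1) * n)"
    by (simp add: field_simps power2_eq_square)
  show ?thesis
    unfolding cf_def p Bt G fs pw
    using gen[of "Gamma (y + 1)" "fact k" "real (Suc k)" "Gamma (y + 1 + real k)" "fact r" "Gamma (real k + 1 - y)"] gy fk nk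
    by simp
qed

lemma lemmaA:
  assumes y: "\<bar>y\<bar> < 1"
  shows "(\<integral>\<^sup>+ z. ennreal (indicator E2 z * hy r y z) \<partial>lborel) = ennreal (fact r * Fr r y)"
proof -
  define c where "c k = cf y k * fact r / real (k + 1) ^ (r + 1)" for k
  have c: "0 \<le> c k" for k unfolding c_def using cf_nonneg[OF y, of k] by simp
  have "(\<integral>\<^sup>+ z. ennreal (indicator E2 z * hy r y z) \<partial>lborel)
      = (\<integral>\<^sup>+ z. ennreal (indicator E2 z * hy r y z) \<partial>(lborel \<Otimes>\<^sub>M lborel))"
    by (simp only: lborel_prod)
  also have "\<dots> = (\<integral>\<^sup>+ a. \<integral>\<^sup>+ b. ennreal (indicator E2 (a, b) * hy r y (a, b)) \<partial>lborel \<partial>lborel)"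
    by (rule lborel.nn_integral_fst[symmetric, OF meas_F2])
  also have "\<dots> = (\<integral>\<^sup>+ a. (\<Sum>k. ennreal (c k) * ennreal (indicator {0<..<1} a * (a powr y * (1 - a) powr (real k - y)))) \<partial>lborel)"
  proof (rule nn_integral_cong)
    fix a :: real
    show "(\<integral>\<^sup>+ b. ennreal (indicator E2 (a, b) * hy r y (a, b)) \<partial>lborel) =
        (\<Sum>k. ennreal (c k) * ennreal (indicator {0<..<1} a * (a powr y * (1 - a) powr (real k - y))))"
      unfolding inner_integral[OF y]
    proof (intro suminf_cong)
      fix k
      have e: "cf y k * fact r / real (k + 1) ^ (r + 1) * indicator {0<..<1} a * (a powr y * (1 - a) powr (real k - y))
          = c k * (indicator {0<..<1} a * (a powr y * (1 - a) powr (real k - y)))"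
        by (simp add: c_def)
      show "ennreal (cf y k * fact r / real (k + 1) ^ (r + 1) * indicator {0<..<1} a * (a powr y * (1 - a) powr (real k - y)))
          = ennreal (c k) * ennreal (indicator {0<..<1} a * (a powr y * (1 - a) powr (real k - y)))"
        unfolding e by (rule ennreal_mult[OF c]) simp
    qed
  qed
  also have "\<dots> = (\<Sum>k. \<integral>\<^sup>+ a. ennreal (c k) * ennreal (indicator {0<..<1} a * (a powr y * (1 - a) powr (real k - y))) \<partial>lborel)"
    by (rule nn_integral_suminf) measurable
  also have "\<dots> = (\<Sum>k. ennreal (c k) * ennreal (Beta (y + 1) (real k + 1 - y)))"
  proof (rule suminf_cong)
    fix k
    show "(\<integral>\<^sup>+ a. ennreal (c k) * ennreal (indicator {0<..<1} a * (a powr y * (1 - a) powr (real k - y))) \<partial>lborel)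
        = ennreal (c k) * ennreal (Beta (y + 1) (real k + 1 - y))"
      by (subst nn_integral_cmult) (measurable, simp add: beta_nn[OF y])
  qed
  also have "\<dots> = (\<Sum>k. ennreal (fact r * G k y / real (Suc k) ^ (r + 2)))"
  proof (rule suminf_cong)
    fix k
    have b0: "0 \<le> Beta (y + 1) (real k + 1 - y)"
      unfolding Beta_def using y by (intro divide_nonneg_pos mult_nonneg_nonneg Gamma_real_nonneg Gamma_real_pos) auto
    show "ennreal (c k) * ennreal (Beta (y + 1) (real k + 1 - y)) = ennreal (fact r * G k y / real (Suc k) ^ (r + 2))"
      using coef_identity[OF y, of k r] c[of k] b0 by (simp add: c_def ennreal_mult[symmetric])
  qed
  also have "\<dots> = ennreal (fact r * Fr r y)"
  proof (rule suminf_ennreal_eq)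
    show "0 \<le> fact r * G k y / real (Suc k) ^ (r + 2)" for k using G_pos[OF y, of k] by simp
    have "(\<lambda>k. fact r * (G k y / real (Suc k) ^ (r + 2))) sums (fact r * Fr r y)"
      unfolding Fr_def by (rule sums_mult[OF summable_sums[OF summable_Fr[OF y]]])
    then show "(\<lambda>k. fact r * G k y / real (Suc k) ^ (r + 2)) sums (fact r * Fr r y)" by simp
  qed
  finally show ?thesis .
qed

definition L1f :: "real \<times> real \<Rightarrow> real" where "L1f z = ln ((1 - fst z) / (1 - snd z))"
definition L2f :: "real \<times> real \<Rightarrow> real" where "L2f z = ln (1 / (1 - fst z)) - ln (snd z / fst z)"
definition Df :: "real \<times> real \<Rightarrow> real" where "Df z = (1 - fst z) * snd z"

lemma integrand_alt: "integrand3p2 r n z = L1f z ^ r * L2f z ^ n / Df z"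
  by (cases z) (simp add: integrand3p2_def L1f_def L2f_def Df_def)

lemma L1f_nonneg: "z \<in> E2 \<Longrightarrow> 0 \<le> L1f z"
  by (cases z) (auto simp: E2_def L1f_def field_simps)

lemma Df_pos: "z \<in> E2 \<Longrightarrow> 0 < Df z"
  by (cases z) (auto simp: E2_def Df_def)

lemma hy_alt2:
  assumes "z \<in> E2"
  shows "hy r y z = L1f z ^ r * exp (y * L2f z) / Df z"
proof -
  obtain a b where z: "z = (a, b)" by (cases z)
  with assms have a0: "0 < a" and ab: "a < b" and b1: "b < 1" by (auto simp: E2_def)
  have a1: "0 < 1 - a" and b0: "0 < b" using a0 ab b1 by auto
  have L2: "L2f z = - ln (1 - a) - ln b + ln a"
    using a0 a1 b0 by (simp add: z L2f_def ln_div)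
  have "a powr y * (1 - a) powr (- y - 1) * b powr (- y - 1)
      = exp (y * ln a) * exp ((- y - 1) * ln (1 - a)) * exp ((- y - 1) * ln b)"
    using a0 a1 b0 by (simp add: powr_def)
  also have "\<dots> = exp (y * ln a + (- y - 1) * ln (1 - a) + (- y - 1) * ln b)"
    by (simp add: exp_add)
  also have "y * ln a + (- y - 1) * ln (1 - a) + (- y - 1) * ln b = y * L2f z - (ln (1 - a) + ln b)"
    unfolding L2 by (simp add: algebra_simps)
  also have "exp (y * L2f z - (ln (1 - a) + ln b)) = exp (y * L2f z) / ((1 - a) * b)"
    using a1 b0 by (simp add: exp_diff exp_add)
  finally have "a powr y * (1 - a) powr (- y - 1) * b powr (- y - 1) = exp (y * L2f z) / Df z"
    by (simp add: Df_def z)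
  then show ?thesis
    by (simp add: hy_def z L1f_def mult.assoc)
qed

lemma exp_power_bound:
  fixes t :: real
  assumes "0 \<le> t"
  shows "t ^ n / fact n \<le> exp t"
proof -
  have s: "(\<lambda>n. t ^ n /\<^sub>R fact n) sums exp t" by (rule exp_converges)
  have "sum (\<lambda>n. t ^ n /\<^sub>R fact n) {n} \<le> suminf (\<lambda>n. t ^ n /\<^sub>R fact n)"
    using sum_le_suminf[of "\<lambda>n. t ^ n /\<^sub>R fact n" "{n}"] s assms by (simp add: sums_iff)
  then show ?thesis using s by (simp add: sums_iff divide_inverse mult.commute)
qed

lemma abs_pow_bound: "\<bar>x::real\<bar> ^ n \<le> fact n * 2 ^ n * (exp (x / 2) + exp (- x / 2))"
proof -
  have "(\<bar>x\<bar> / 2) ^ n / fact n \<le> exp (\<bar>x\<bar> / 2)" by (rule exp_power_bound) simp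
  also have "exp (\<bar>x\<bar> / 2) \<le> exp (x / 2) + exp (- x / 2)"
    by (cases "x \<ge> 0") (simp_all add: add_increasing add_increasing2)
  finally have "(\<bar>x\<bar> / 2) ^ n \<le> fact n * (exp (x / 2) + exp (- x / 2))"
    by (simp add: divide_le_eq mult.commute)
  then have "\<bar>x\<bar> ^ n \<le> 2 ^ n * (fact n * (exp (x / 2) + exp (- x / 2)))"
    by (simp add: power_divide divide_le_eq mult.commute)
  then show ?thesis by (simp add: mult_ac)
qed

lemma exp_abs_bound: "exp \<bar>x::real\<bar> \<le> exp x + exp (- x)"
  by (cases "x \<ge> 0") (simp_all add: add_increasing add_increasing2)

lemma meas_integrand[measurable]: "integrand3p2 r n \<in> borel_measurable lborel"
proof -
  have "(\<lambda>z. L1f z ^ r * L2f z ^ n / Df z) \<in> borel_measurable (lborel \<Otimes>\<^sub>M lborel)"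
    unfolding L1f_def L2f_def Df_def by measurable
  then show ?thesis unfolding lborel_prod integrand_alt[abs_def] .
qed

lemma meas_hy[measurable]: "hy r y \<in> borel_measurable lborel"
  using meas_hy2[of r y] unfolding lborel_prod .

lemma E2_sets[measurable]: "E2 \<in> sets lborel"
  using E2_borel by simp

lemma integrable_hy:
  assumes "\<bar>y\<bar> < 1"
  shows "integrable lborel (\<lambda>z. indicator E2 z * hy r y z)"
    and "integral\<^sup>L lborel (\<lambda>z. indicator E2 z * hy r y z) = fact r * Fr r y"
proof -
  have nn: "0 \<le> indicator E2 z * hy r y z" for z
  proof (cases "z \<in> E2")
    case True
    then show ?thesis using L1f_nonneg[OF True] Df_pos[OF True] by (simp add: hy_alt2)
  qed simp
  have F: "0 \<le> fact r * Fr r y"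
  proof -
    have "0 \<le> (\<Sum>k. G k y / real (Suc k) ^ (r + 2))"
      by (rule suminf_nonneg[OF summable_Fr[OF assms]]) (use G_pos[OF assms] in \<open>simp add: less_imp_le\<close>)
    then show ?thesis by (simp add: Fr_def)
  qed
  have "integrable lborel (\<lambda>z. indicator E2 z * hy r y z) \<and> integral\<^sup>L lborel (\<lambda>z. indicator E2 z * hy r y z) = fact r * Fr r y"
    by (rule nn_integral_eq_integrable[THEN iffD1]) (use nn F lemmaA[OF assms] in auto)
  then show "integrable lborel (\<lambda>z. indicator E2 z * hy r y z)"
    and "integral\<^sup>L lborel (\<lambda>z. indicator E2 z * hy r y z) = fact r * Fr r y" by auto
qed

lemma set_integrable_integrand: "set_integrable lborel E2 (integrand3p2 r n)"
proof -
  have h1: "integrable lborel (\<lambda>z. fact n * 2 ^ n * (indicator E2 z * hy r (1/2) z + indicator E2 z * hy r (- (1/2)) z))"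
    by (intro integrable_mult_right Bochner_Integration.integrable_add integrable_hy) auto
  show ?thesis unfolding set_integrable_def
  proof (rule Bochner_Integration.integrable_bound[OF h1])
    show "(\<lambda>x. indicator E2 x *\<^sub>R integrand3p2 r n x) \<in> borel_measurable lborel" by measurable
    show "AE x in lborel. norm (indicator E2 x *\<^sub>R integrand3p2 r n x) \<le>
        norm (fact n * 2 ^ n * (indicator E2 x * hy r (1/2) x + indicator E2 x * hy r (- (1/2)) x))"
    proof (rule AE_I2)
      fix z
      show "norm (indicator E2 z *\<^sub>R integrand3p2 r n z) \<le>
        norm (fact n * 2 ^ n * (indicator E2 z * hy r (1/2) z + indicator E2 z * hy r (- (1/2)) z))"
      proof (cases "z \<in> E2")
        case True
        have L1: "0 \<le> L1f z" by (rule L1f_nonneg[OF True])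
        have D: "0 < Df z" by (rule Df_pos[OF True])
        have "\<bar>integrand3p2 r n z\<bar> = L1f z ^ r * \<bar>L2f z\<bar> ^ n / Df z"
          using L1 D by (simp add: integrand_alt abs_mult power_abs)
        also have "\<dots> \<le> L1f z ^ r * (fact n * 2 ^ n * (exp (L2f z / 2) + exp (- L2f z / 2))) / Df z"
          using L1 D by (intro divide_right_mono mult_left_mono abs_pow_bound) auto
        also have "\<dots> = fact n * 2 ^ n * (hy r (1/2) z + hy r (- (1/2)) z)"
          using True D by (simp add: hy_alt2 field_simps)
        finally have "\<bar>integrand3p2 r n z\<bar> \<le> fact n * 2 ^ n * (hy r (1/2) z + hy r (- (1/2)) z)" .
        moreover have "0 \<le> hy r (1/2) z + hy r (- (1/2)) z"
          using True L1 D by (simp add: hy_alt2)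
        ultimately show ?thesis using True by simp
      qed simp
    qed
  qed
qed

lemma norm_series_bound:
  assumes z: "z \<in> E2"
  shows "(\<lambda>n. (L1f z ^ r / Df z) * (\<bar>y * L2f z\<bar> ^ n / fact n)) sums ((L1f z ^ r / Df z) * exp \<bar>y * L2f z\<bar>)"
proof -
  have "(\<lambda>n. \<bar>y * L2f z\<bar> ^ n /\<^sub>R fact n) sums exp \<bar>y * L2f z\<bar>" by (rule exp_converges)
  then have "(\<lambda>n. \<bar>y * L2f z\<bar> ^ n / fact n) sums exp \<bar>y * L2f z\<bar>"
    by (simp add: divide_inverse mult.commute)
  then show ?thesis by (rule sums_mult)
qed

lemma series_C:
  assumes y: "\<bar>y\<bar> < 1"
  shows "(\<lambda>n. y ^ n / fact n * set_lebesgue_integral lborel E2 (integrand3p2 r n)) sums (fact r * Fr r y)"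
proof -
  define u where "u n z = y ^ n / fact n * (indicator E2 z * integrand3p2 r n z)" for n z
  have int_u: "integrable lborel (u n)" for n
  proof -
    have "integrable lborel (\<lambda>z. indicator E2 z * integrand3p2 r n z)"
      using set_integrable_integrand[of r n] by (simp add: set_integrable_def)
    then show ?thesis unfolding u_def by (rule integrable_mult_right)
  qed
  have norm_u: "norm (u n z) = indicator E2 z * ((L1f z ^ r / Df z) * (\<bar>y * L2f z\<bar> ^ n / fact n))" for n z
  proof (cases "z \<in> E2")
    case True
    then show ?thesis using L1f_nonneg[OF True] Df_pos[OF True]
      by (simp add: u_def integrand_alt abs_mult power_abs power_mult_distrib mult_ac)
  qed (simp add: u_def)
  have summ: "summable (\<lambda>n. norm (u n z))" for z
  proof (cases "z \<in> E2")
    case True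
    then show ?thesis unfolding norm_u using sums_summable[OF norm_series_bound[OF True, of r y]] by simp
  qed (unfold norm_u, simp)
  have sum_norm: "(\<Sum>n. norm (u n z)) \<le> indicator E2 z * hy r y z + indicator E2 z * hy r (- y) z" for z
  proof (cases "z \<in> E2")
    case True
    have L1: "0 \<le> L1f z" and D: "0 < Df z" using L1f_nonneg[OF True] Df_pos[OF True] by auto
    have "(\<lambda>n. norm (u n z)) sums ((L1f z ^ r / Df z) * exp \<bar>y * L2f z\<bar>)"
      unfolding norm_u using norm_series_bound[OF True, of r y] True by simp
    then have "(\<Sum>n. norm (u n z)) = (L1f z ^ r / Df z) * exp \<bar>y * L2f z\<bar>"
      by (rule sums_unique[symmetric])
    also have "\<dots> \<le> (L1f z ^ r / Df z) * (exp (y * L2f z) + exp (- (y * L2f z)))"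
      using L1 D by (intro mult_left_mono exp_abs_bound) auto
    also have "\<dots> = indicator E2 z * hy r y z + indicator E2 z * hy r (- y) z"
      using True by (simp add: hy_alt2 add_divide_distrib distrib_left)
    finally show ?thesis .
  qed (unfold norm_u, simp)
  have int_bound: "integrable lborel (\<lambda>z. indicator E2 z * hy r y z + indicator E2 z * hy r (- y) z)"
    by (intro Bochner_Integration.integrable_add integrable_hy) (use y in auto)
  have bnd_nn: "0 \<le> indicator E2 z * hy r y z + indicator E2 z * hy r (- y) z" for z
    using sum_norm[of z] by (rule order_trans[rotated]) (intro suminf_nonneg summ norm_ge_zero)
  have summ_int: "summable (\<lambda>n. \<integral>z. norm (u n z) \<partial>lborel)"
  proof (rule summable_suminf_not_top)
    show "0 \<le> (\<integral>z. norm (u n z) \<partial>lborel)" for n by simp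
    have "(\<Sum>n. ennreal (\<integral>z. norm (u n z) \<partial>lborel)) = (\<Sum>n. \<integral>\<^sup>+ z. ennreal (norm (u n z)) \<partial>lborel)"
      by (intro suminf_cong nn_integral_eq_integral[symmetric] integrable_norm int_u) auto
    also have "\<dots> = (\<integral>\<^sup>+ z. (\<Sum>n. ennreal (norm (u n z))) \<partial>lborel)"
      by (rule nn_integral_suminf[symmetric]) (simp add: u_def)
    also have "\<dots> = (\<integral>\<^sup>+ z. ennreal (\<Sum>n. norm (u n z)) \<partial>lborel)"
      by (intro nn_integral_cong suminf_ennreal2 summ) auto
    also have "\<dots> \<le> (\<integral>\<^sup>+ z. ennreal (indicator E2 z * hy r y z + indicator E2 z * hy r (- y) z) \<partial>lborel)"
      by (intro nn_integral_mono ennreal_leI sum_norm)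
    also have "\<dots> = ennreal (\<integral>z. indicator E2 z * hy r y z + indicator E2 z * hy r (- y) z \<partial>lborel)"
      by (rule nn_integral_eq_integral[OF int_bound]) (use bnd_nn in auto)
    also have "\<dots> < top" by simp
    finally show "(\<Sum>n. ennreal (\<integral>z. norm (u n z) \<partial>lborel)) \<noteq> top" by simp
  qed
  have "(\<lambda>n. integral\<^sup>L lborel (u n)) sums (\<integral>z. (\<Sum>n. u n z) \<partial>lborel)"
    by (rule sums_integral[OF int_u AE_I2[OF summ] summ_int])
  moreover have "integral\<^sup>L lborel (u n) = y ^ n / fact n * set_lebesgue_integral lborel E2 (integrand3p2 r n)" for n
    unfolding u_def set_lebesgue_integral_def by simp
  moreover have "(\<Sum>n. u n z) = indicator E2 z * hy r y z" for z
  proof (cases "z \<in> E2")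
    case True
    have "(\<lambda>n. (y * L2f z) ^ n /\<^sub>R fact n) sums exp (y * L2f z)" by (rule exp_converges)
    then have "(\<lambda>n. (L1f z ^ r / Df z) * ((y * L2f z) ^ n /\<^sub>R fact n)) sums ((L1f z ^ r / Df z) * exp (y * L2f z))"
      by (rule sums_mult)
    moreover have "(L1f z ^ r / Df z) * ((y * L2f z) ^ n /\<^sub>R fact n) = u n z" for n
      using True by (simp add: u_def integrand_alt power_mult_distrib divide_inverse mult_ac)
    ultimately have "(\<lambda>n. u n z) sums ((L1f z ^ r / Df z) * exp (y * L2f z))" by simp
    then show ?thesis using True by (simp add: sums_iff hy_alt2)
  qed (simp add: u_def)
  ultimately show ?thesis using integrable_hy(2)[OF y, of r] by simp
qed

lemma powser_coeff_unique:
  fixes c d :: "nat \<Rightarrow> real"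
  assumes d: "\<delta> > 0"
  assumes c: "\<And>y. \<bar>y\<bar> < \<delta> \<Longrightarrow> (\<lambda>n. c n * y ^ n) sums F y"
  assumes e: "\<And>y. \<bar>y\<bar> < \<delta> \<Longrightarrow> (\<lambda>n. d n * y ^ n) sums F y"
  shows "c n = d n"
proof -
  define g where "g n = c n - d n" for n
  have g: "(\<lambda>n. g n * y ^ n) sums 0" if "\<bar>y\<bar> < \<delta>" for y
    using sums_diff[OF c[OF that] e[OF that]] by (simp add: g_def algebra_simps)
  have "g n = 0" for n
  proof (induction n rule: less_induct)
    case (less n)
    have sh: "(\<lambda>m. g (m + n) * y ^ m) sums 0" if y: "y \<noteq> 0" "norm y < \<delta>" for y
    proof -
      have "(\<lambda>m. g (m + n) * y ^ (m + n)) sums (0 - (\<Sum>i<n. g i * y ^ i))"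
        using sums_iff_shift[of "\<lambda>m. g m * y ^ m" n "0 - (\<Sum>i<n. g i * y ^ i)"] g[of y] y by simp
      also have "(\<Sum>i<n. g i * y ^ i) = 0" using less by simp
      finally have "(\<lambda>m. g (m + n) * y ^ (m + n)) sums 0" by simp
      then have "(\<lambda>m. (g (m + n) * y ^ (m + n)) * inverse (y ^ n)) sums (0 * inverse (y ^ n))"
        by (rule sums_mult2)
      moreover have "(g (m + n) * y ^ (m + n)) * inverse (y ^ n) = g (m + n) * y ^ m" for m
        using y by (simp add: power_add field_simps)
      ultimately show ?thesis by simp
    qed
    have "((\<lambda>_. 0::real) \<longlongrightarrow> (\<lambda>m. g (m + n)) 0) (at (0::real))"
      by (rule powser_limit_0_strong[OF d, of "\<lambda>m. g (m + n)" "\<lambda>_. 0"]) (use sh in simp)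
    then show ?case by (simp add: tendsto_const_iff)
  qed
  then show ?thesis by (simp add: g_def)
qed

theorem theorem3p2:
  fixes r n :: nat
  shows "set_integrable lborel E2 (integrand3p2 r n) \<and>
         (1 / (fact r * fact n)) * (\<integral>t\<in>E2. integrand3p2 r n t \<partial>lborel) =
           (if even n then zeta_star ((r + 2) # replicate (n div 2) 2) else 0)"
proof
  show "set_integrable lborel E2 (integrand3p2 r n)" by (rule set_integrable_integrand)
  have B0: "0 \<le> B0" using T_bounds[of 1 0] by simp
  define \<delta> where "\<delta> = min (1/2) (1 / (B0 + 1))"
  have dpos: "\<delta> > 0" using B0 by (simp add: \<delta>_def)
  define c where "c n = (1 / (fact r * fact n)) * (\<integral>t\<in>E2. integrand3p2 r n t \<partial>lborel)" for n
  define d where "d n = (if even n then Zs r (n div 2) else 0)" for n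
  have yy: "\<bar>y\<bar> < 1" "y^2 * B0 < 1" if "\<bar>y\<bar> < \<delta>" for y
  proof -
    have y1: "\<bar>y\<bar> < 1/2" "\<bar>y\<bar> < 1 / (B0 + 1)" using that by (auto simp: \<delta>_def)
    then show "\<bar>y\<bar> < 1" by simp
    have "\<bar>y\<bar> * \<bar>y\<bar> \<le> \<bar>y\<bar> * 1" by (rule mult_left_mono) (use y1 in auto)
    then have "y^2 \<le> \<bar>y\<bar>" by (simp add: power2_eq_square)
    then have "y^2 * B0 \<le> \<bar>y\<bar> * B0" using B0 by (rule mult_right_mono)
    also have "\<dots> \<le> (1 / (B0 + 1)) * B0" using y1 B0 by (intro mult_right_mono) auto
    also have "\<dots> < 1" using B0 by (simp add: field_simps)
    finally show "y^2 * B0 < 1" .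
  qed
  have cs: "(\<lambda>n. c n * y ^ n) sums Fr r y" if "\<bar>y\<bar> < \<delta>" for y
  proof -
    have "(\<lambda>n. (y ^ n / fact n * set_lebesgue_integral lborel E2 (integrand3p2 r n)) / fact r) sums (fact r * Fr r y / fact r)"
      by (rule sums_divide[OF series_C[OF yy(1)[OF that]]])
    moreover have "(y ^ n / fact n * set_lebesgue_integral lborel E2 (integrand3p2 r n)) / fact r = c n * y ^ n" for n
      by (simp add: c_def field_simps)
    ultimately show ?thesis by simp
  qed
  have ds: "(\<lambda>n. d n * y ^ n) sums Fr r y" if "\<bar>y\<bar> < \<delta>" for y
    unfolding d_def by (rule Fr_powser[OF yy[OF that]])
  have cd: "c n = d n" by (rule powser_coeff_unique[OF dpos cs ds])
  show "(1 / (fact r * fact n)) * (\<integral>t\<in>E2. integrand3p2 r n t \<partial>lborel) =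
           (if even n then zeta_star ((r + 2) # replicate (n div 2) 2) else 0)"
    unfolding zeta_star_eq using cd by (simp only: c_def d_def)
qed

end
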